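(* Let $X$ be a real Banach space, $x\in X$ and $\delta\in[0,2]$. Then: (1) $P_{B_X}(x,\delta)\subseteq Q_{B_X}(-x,\delta)$ whenever $\|x\|\ge1$; (2) $P_{S_X}(x,\delta)\subseteq Q_{S_X}(-x,\delta)$; (3) $Q_{S_X}(x)=Q_{B_X}(x)$.
   Context: $B_X,S_X$ are the closed unit ball and unit sphere. For non-empty bounded $F$, $r(F,x)=\sup_{y\in F}\|x-y\|$, $Q_F(x,\delta)=\{y\in F:\|x-y\|\ge r(F,x)-\delta\}$, $Q_F(x)=Q_F(x,0)$. For non-empty closed $A$, $P_A(x,\delta)=\{y\in A:\|x-y\|\le\inf_{z\in A}\|x-z\|+\delta\}$. *)

theory Defs
  imports "HOL-Analysis.Analysis"
begin

definition farthest_radius :: "'a::real_normed_vector set \<Rightarrow> 'a \<Rightarrow> real" where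
  "farthest_radius F x = (SUP y\<in>F. norm (x - y))"

definition Qfar :: "'a::real_normed_vector set \<Rightarrow> 'a \<Rightarrow> real \<Rightarrow> 'a set" where
  "Qfar F x \<delta> = {y \<in> F. norm (x - y) \<ge> farthest_radius F x - \<delta>}"

definition Pnear :: "'a::real_normed_vector set \<Rightarrow> 'a \<Rightarrow> real \<Rightarrow> 'a set" where
  "Pnear A x \<delta> = {y \<in> A. norm (x - y) \<le> (INF z\<in>A. norm (x - z)) + \<delta>}"

end

theory Submission
  imports Defs
begin

lemma unit_dir:
  fixes x :: "'a::real_normed_vector"
  assumes "\<exists>v::'a. v \<noteq> 0"
  shows "\<exists>u. norm u = 1 \<and> x = norm x *\<^sub>R u"
proof (cases "x = 0")
  case True
  then obtain v :: 'a where "v \<noteq> 0" using assms by blast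
  then show ?thesis using True by (intro exI[of _ "v /\<^sub>R norm v"]) auto
next
  case False
  then show ?thesis by (intro exI[of _ "x /\<^sub>R norm x"]) auto
qed

lemma fr_le:
  fixes x :: "'a::real_normed_vector"
  assumes "F \<noteq> {}" "F \<subseteq> cball 0 1"
  shows "farthest_radius F x \<le> norm x + 1"
  unfolding farthest_radius_def
proof (rule cSUP_least[OF assms(1)])
  fix y assume "y \<in> F"
  then have "norm y \<le> 1" using assms(2) by auto
  then show "norm (x - y) \<le> norm x + 1" using norm_triangle_ineq4[of x y] by linarith
qed

lemma fr_ge:
  fixes x :: "'a::real_normed_vector"
  assumes "F \<subseteq> cball 0 1" "y \<in> F"
  shows "norm (x - y) \<le> farthest_radius F x"
  unfolding farthest_radius_def
proof (rule cSUP_upper[OF assms(2)])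
  show "bdd_above ((\<lambda>y. norm (x - y)) ` F)"
  proof (rule bdd_aboveI2)
    fix y assume "y \<in> F"
    then have "norm y \<le> 1" using assms(1) by auto
    then show "norm (x - y) \<le> norm x + 1" using norm_triangle_ineq4[of x y] by linarith
  qed
qed

lemma inf_le:
  fixes x :: "'a::real_normed_vector"
  assumes "z \<in> A"
  shows "(INF z\<in>A. norm (x - z)) \<le> norm (x - z)"
  by (rule cINF_lower[OF _ assms]) (auto intro: bdd_belowI2[where m=0])

theorem proposition2p12:
  fixes x :: "'a::banach" and \<delta> :: real
  assumes nontriv: "\<exists>v::'a. v \<noteq> 0"
    and delta: "0 \<le> \<delta>" "\<delta> \<le> 2"
  shows "(norm x \<ge> 1 \<longrightarrow> Pnear (cball 0 1) x \<delta> \<subseteq> Qfar (cball 0 1) (-x) \<delta>)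
       \<and> Pnear (sphere 0 1) x \<delta> \<subseteq> Qfar (sphere 0 1) (-x) \<delta>
       \<and> Qfar (sphere 0 1) x 0 = Qfar (cball 0 1) x 0"
proof -
  obtain u :: 'a where u: "norm u = 1" "x = norm x *\<^sub>R u" using unit_dir[OF nontriv] by blast
  have xu: "norm (x - u) = \<bar>norm x - 1\<bar>"
  proof -
    have "x - u = (norm x - 1) *\<^sub>R u" using u by (metis scaleR_collapse scaleR_diff_left scaleR_one)
    then show ?thesis using u by simp
  qed
  have xu2: "norm (x - (-u)) = norm x + 1"
  proof -
    have "x - (-u) = (norm x + 1) *\<^sub>R u" using u by (metis diff_minus_eq_add scaleR_add_left scaleR_one)
    then show ?thesis using u by simp
  qed
  have S: "sphere (0::'a) 1 \<noteq> {}" "sphere (0::'a) 1 \<subseteq> cball 0 1" using u by auto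
  have B: "cball (0::'a) 1 \<noteq> {}" by auto
  have uS: "u \<in> sphere 0 1" "-u \<in> sphere 0 1" using u by auto
  have P1: "norm x \<ge> 1 \<longrightarrow> Pnear (cball 0 1) x \<delta> \<subseteq> Qfar (cball 0 1) (-x) \<delta>"
  proof (intro impI subsetI)
    fix y assume x1: "norm x \<ge> 1" and y: "y \<in> Pnear (cball 0 1) x \<delta>"
    have yb: "y \<in> cball 0 1" and d: "norm (x - y) \<le> (INF z\<in>cball 0 1. norm (x - z)) + \<delta>"
      using y unfolding Pnear_def by auto
    have "(INF z\<in>cball 0 1. norm (x - z)) \<le> norm x - 1"
      using inf_le[of u "cball 0 1" x] uS xu x1 by auto
    moreover have "farthest_radius (cball 0 1) (-x) \<le> norm (-x) + 1" by (rule fr_le[OF B]) auto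
    moreover have "norm (x + y) \<ge> 2 * norm x - norm (x - y)"
      using norm_triangle_ineq[of "x + y" "x - y"] norm_scaleR[of 2 x] by (simp add: scaleR_2)
    ultimately show "y \<in> Qfar (cball 0 1) (-x) \<delta>" using yb d unfolding Qfar_def
      by (auto simp: norm_minus_commute[of "-x"] add.commute)
  qed
  have P2: "Pnear (sphere 0 1) x \<delta> \<subseteq> Qfar (sphere 0 1) (-x) \<delta>"
  proof
    fix y assume y: "y \<in> Pnear (sphere 0 1) x \<delta>"
    have yb: "norm y = 1" and d: "norm (x - y) \<le> (INF z\<in>sphere 0 1. norm (x - z)) + \<delta>"
      using y unfolding Pnear_def by auto
    have "(INF z\<in>sphere 0 1. norm (x - z)) \<le> \<bar>norm x - 1\<bar>"
      using inf_le[of u "sphere 0 1" x] uS xu by auto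
    moreover have "farthest_radius (sphere 0 1) (-x) \<le> norm (-x) + 1" by (rule fr_le[OF S])
    moreover have "norm (x + y) \<ge> 2 * norm x - norm (x - y)"
      using norm_triangle_ineq[of "x + y" "x - y"] norm_scaleR[of 2 x] by (simp add: scaleR_2)
    moreover have "norm (x + y) \<ge> 2 * norm y - norm (x - y)"
      using norm_triangle_ineq4[of "x + y" "x - y"] norm_scaleR[of 2 y] by (simp add: scaleR_2)
    ultimately show "y \<in> Qfar (sphere 0 1) (-x) \<delta>" using yb d unfolding Qfar_def
      by (auto simp: norm_minus_commute[of "-x"] add.commute abs_if split: if_splits)
  qed
  have rS: "farthest_radius (sphere 0 1) x = norm x + 1"
    using fr_le[OF S, of x] fr_ge[OF S(2) uS(2), of x] xu2 by linarith
  have rB: "farthest_radius (cball 0 1) x = norm x + 1"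
    using fr_le[OF B, of x] fr_ge[of "cball 0 1" "-u" x] uS xu2 by auto
  have P3: "Qfar (sphere 0 1) x 0 = Qfar (cball 0 1) x 0"
  proof
    show "Qfar (sphere 0 1) x 0 \<subseteq> Qfar (cball 0 1) x 0"
      unfolding Qfar_def rS rB by auto
    show "Qfar (cball 0 1) x 0 \<subseteq> Qfar (sphere 0 1) x 0"
    proof
      fix y assume "y \<in> Qfar (cball 0 1) x 0"
      then have "norm y \<le> 1" "norm (x - y) \<ge> norm x + 1" unfolding Qfar_def rB by auto
      moreover have "norm (x - y) \<le> norm x + norm y" by (rule norm_triangle_ineq4)
      ultimately have "norm y = 1" by linarith
      with \<open>norm (x - y) \<ge> norm x + 1\<close> show "y \<in> Qfar (sphere 0 1) x 0"
        unfolding Qfar_def rS by auto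
    qed
  qed
  show ?thesis using P1 P2 P3 by blast
qed

end
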